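(* Let $G=Q_8=\{\pm E,\pm I,\pm J,\pm K\}$ be the quaternion group ($IJ=-JI=K$, $JK=-KJ=I$, $KI=-IK=J$, $IJK=-E$). Then the class semigroup $\mathcal C(\mathcal B(G),\mathcal F(G))$ has exactly $18$ elements.
   Context: For a finite group $G$ (multiplicative, identity $1_G$), $\mathcal F(G)$ is the free abelian monoid with basis $G$ (sequences $S=g_1\boldsymbol{\cdot}\ldots\boldsymbol{\cdot}g_\ell$, operation $\boldsymbol{\cdot}$ = concatenation). $\pi(S)=\{g_{\tau(1)}\cdots g_{\tau(\ell)}:\tau\text{ a permutation of }[1,\ell]\}$, $\pi$ of the empty sequence is $\{1_G\}$, and $\mathcal B(G)=\{S\in\mathcal F(G):1_G\in\pi(S)\}$. For $S,S'\in\mathcal F(G)$, $S\sim S'$ means: for all $T\in\mathcal F(G)$, $S\boldsymbol{\cdot}T\in\mathcal B(G)\iff S'\boldsymbol{\cdot}T\in\mathcal B(G)$; this is a congruence and the class semigroup $\mathcal C(\mathcal B(G),\mathcal F(G))$ is the set of its equivalence classes. *)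

theory Defs
  imports "HOL-Algebra.Group" "HOL-Library.Multiset"
begin

definition seqs :: "('a, 'b) monoid_scheme \<Rightarrow> 'a multiset set" where
  "seqs G = {S. set_mset S \<subseteq> carrier G}"

definition seq_prods :: "('a, 'b) monoid_scheme \<Rightarrow> 'a multiset \<Rightarrow> 'a set" where
  "seq_prods G S = {foldr (\<otimes>\<^bsub>G\<^esub>) xs \<one>\<^bsub>G\<^esub> | xs. mset xs = S}"

definition prod_one_seqs :: "('a, 'b) monoid_scheme \<Rightarrow> 'a multiset set" where
  "prod_one_seqs G = {S \<in> seqs G. \<one>\<^bsub>G\<^esub> \<in> seq_prods G S}"

definition class_rel :: "('a, 'b) monoid_scheme \<Rightarrow> ('a multiset \<times> 'a multiset) set" where
  "class_rel G = {(S, S'). S \<in> seqs G \<and> S' \<in> seqs G \<and>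
      (\<forall>T \<in> seqs G. (S + T \<in> prod_one_seqs G) \<longleftrightarrow> (S' + T \<in> prod_one_seqs G))}"

definition class_semigroup :: "('a, 'b) monoid_scheme \<Rightarrow> 'a multiset set set" where
  "class_semigroup G = seqs G // class_rel G"

datatype qunit = qE | qI | qJ | qK

text \<open>Product of units: (negative sign?, unit).\<close>
fun qunit_mult :: "qunit \<Rightarrow> qunit \<Rightarrow> bool \<times> qunit" where
  "qunit_mult qE x = (False, x)"
| "qunit_mult x qE = (False, x)"
| "qunit_mult qI qI = (True, qE)"
| "qunit_mult qJ qJ = (True, qE)"
| "qunit_mult qK qK = (True, qE)"
| "qunit_mult qI qJ = (False, qK)"
| "qunit_mult qJ qI = (True, qK)"
| "qunit_mult qJ qK = (False, qI)"
| "qunit_mult qK qJ = (True, qI)"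
| "qunit_mult qK qI = (False, qJ)"
| "qunit_mult qI qK = (True, qJ)"

text \<open>Elements of Q8: (s, u) represents -u if s, else u.\<close>
type_synonym q8 = "bool \<times> qunit"

definition q8_mult :: "q8 \<Rightarrow> q8 \<Rightarrow> q8" where
  "q8_mult a b = (let (s, u) = qunit_mult (snd a) (snd b) in ((fst a \<noteq> fst b) \<noteq> s, u))"

definition Q8 :: "q8 monoid" where
  "Q8 = \<lparr>carrier = UNIV, monoid.mult = q8_mult, monoid.one = (False, qE)\<rparr>"

end

theory Submission
  imports Defs
begin

definition one8 :: q8 where "one8 = (False, qE)"
definition neg8 :: "q8 \<Rightarrow> q8" where "neg8 g = (\<not> fst g, snd g)"
definition vadd :: "qunit \<Rightarrow> qunit \<Rightarrow> qunit" where "vadd u v = snd (qunit_mult u v)"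

lemma qm: "q8_mult (s,u) (t,v) = ((s \<noteq> t) \<noteq> fst (qunit_mult u v), snd (qunit_mult u v))"
  by (simp add: q8_mult_def split: prod.split)

lemma q8_assoc: "q8_mult a (q8_mult b c) = q8_mult (q8_mult a b) c"
proof -
  obtain sa ua sb ub sc uc where "a = (sa,ua)" "b = (sb,ub)" "c = (sc,uc)" by (metis prod.exhaust)
  then show ?thesis by (cases ua; cases ub; cases uc; simp add: qm; argo)
qed

lemma q8_one_left[simp]: "q8_mult one8 z = z"
  by (cases z, simp add: q8_mult_def one8_def)

lemma snd_mult: "snd (q8_mult a b) = vadd (snd a) (snd b)"
  by (simp add: q8_mult_def vadd_def split: prod.split)

lemma vadd_comm: "vadd u v = vadd v u"
  by (cases u; cases v; simp add: vadd_def)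

lemma vadd_assoc: "vadd u (vadd v w) = vadd (vadd u v) w"
  by (cases u; cases v; cases w; simp add: vadd_def)

lemma commute8: "snd x \<in> {qE, X} \<Longrightarrow> snd y \<in> {qE, X} \<Longrightarrow> q8_mult x y = q8_mult y x"
proof -
  assume a: "snd x \<in> {qE, X}" "snd y \<in> {qE, X}"
  obtain sa ua sb ub where "x = (sa,ua)" "y = (sb,ub)" by (metis prod.exhaust)
  with a show ?thesis by (cases ua; cases ub; cases X; simp add: qm; argo)
qed

lemma anticomm8': "ua \<noteq> qE \<Longrightarrow> ub \<noteq> qE \<Longrightarrow> ua \<noteq> ub \<Longrightarrow>
   q8_mult (sb,ub) (q8_mult (sa,ua) (sc,uc)) = neg8 (q8_mult (sa,ua) (q8_mult (sb,ub) (sc,uc)))"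
  by (cases ua; cases ub; cases uc; simp add: qm neg8_def; argo)

lemma anticomm8: "snd x \<noteq> qE \<Longrightarrow> snd y \<noteq> qE \<Longrightarrow> snd x \<noteq> snd y \<Longrightarrow>
   q8_mult y (q8_mult x p) = neg8 (q8_mult x (q8_mult y p))"
  using anticomm8'[of "snd x" "snd y" "fst y" "fst x" "fst p" "snd p"] by simp

lemma fold_snd: "snd (foldr q8_mult xs z) = foldr vadd (map snd xs) (snd z)"
  by (induction xs) (auto simp: snd_mult)

lemma foldr_mult: "foldr q8_mult xs z = q8_mult (foldr q8_mult xs one8) z"
proof (induction xs arbitrary: z)
  case (Cons x xs)
  have "foldr q8_mult (x # xs) z = q8_mult x (q8_mult (foldr q8_mult xs one8) z)"
    using Cons.IH[of z] by simp
  also have "\<dots> = q8_mult (foldr q8_mult (x # xs) one8) z" by (simp add: q8_assoc)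
  finally show ?case .
qed simp

lemma vadd_lcomm: "vadd x (vadd y z) = vadd y (vadd x z)"
  by (cases x; cases y; cases z; simp add: vadd_def)

lemma foldr_vadd_perm: "mset us = mset vs \<Longrightarrow> foldr vadd us e = foldr vadd vs e"
proof -
  assume "mset us = mset vs"
  hence m: "mset (rev us) = mset (rev vs)" by simp
  have "List.fold vadd (rev us) = List.fold vadd (rev vs)"
    by (rule fold_multiset_equiv[OF _ m]) (simp add: fun_eq_iff vadd_lcomm)
  thus ?thesis by (simp add: foldr_conv_fold)
qed

lemma foldr_comm_perm:
  assumes "mset xs = mset ys" "\<forall>x\<in>set xs. \<forall>y\<in>set xs. q8_mult x y = q8_mult y x"
  shows "foldr q8_mult xs z = foldr q8_mult ys z"
proof -
  have m: "mset (rev xs) = mset (rev ys)" using assms by simp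
  have "List.fold q8_mult (rev xs) = List.fold q8_mult (rev ys)"
  proof (rule fold_multiset_equiv[OF _ m])
    fix x y assume "x \<in> set (rev xs)" "y \<in> set (rev xs)"
    hence c: "q8_mult x y = q8_mult y x" using assms(2) by simp
    show "q8_mult x \<circ> q8_mult y = q8_mult y \<circ> q8_mult x"
    proof
      fix z show "(q8_mult x \<circ> q8_mult y) z = (q8_mult y \<circ> q8_mult x) z"
        using c by (simp add: q8_assoc)
    qed
  qed
  thus ?thesis by (simp add: foldr_conv_fold)
qed

definition listof :: "q8 multiset \<Rightarrow> q8 list" where "listof S = (SOME xs. mset xs = S)"
lemma mset_listof[simp]: "mset (listof S) = S"
  unfolding listof_def by (rule someI_ex, rule ex_mset)

definition prodS :: "q8 multiset \<Rightarrow> q8" where "prodS S = foldr q8_mult (listof S) one8"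
definition vsum :: "q8 multiset \<Rightarrow> qunit" where "vsum S = snd (prodS S)"
definition ax :: "q8 multiset \<Rightarrow> qunit set" where "ax S = snd ` set_mset S - {qE}"

lemma vsum_mset: "mset xs = S \<Longrightarrow> vsum S = snd (foldr q8_mult xs one8)"
  unfolding vsum_def prodS_def fold_snd
  by (rule foldr_vadd_perm) simp

lemma vsum_plus: "vsum (S + T) = vadd (vsum S) (vsum T)"
proof -
  have "vsum (S+T) = snd (foldr q8_mult (listof S @ listof T) one8)"
    by (rule vsum_mset) simp
  also have "\<dots> = snd (q8_mult (prodS S) (prodS T))"
    unfolding prodS_def foldr_append by (subst foldr_mult) (rule refl)
  finally show ?thesis by (simp add: snd_mult vsum_def)
qed

lemma ax_plus: "ax (S + T) = ax S \<union> ax T" by (auto simp: ax_def)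
lemma ax_sub: "ax S \<subseteq> {qI, qJ, qK}"
proof -
  have "\<And>u. u \<noteq> qE \<Longrightarrow> u \<in> {qI, qJ, qK}" by (case_tac u) auto
  thus ?thesis unfolding ax_def by auto
qed
lemma ax_fin[simp]: "finite (ax S)" by (rule finite_subset[OF ax_sub]) simp

lemma small_ax: assumes "card (ax S) \<le> 1" shows "\<exists>X. \<forall>g\<in>#S. snd g \<in> {qE, X}"
proof (cases "\<forall>g\<in>#S. snd g = qE")
  case True thus ?thesis by auto
next
  case False
  then obtain g where g: "g \<in># S" "snd g \<noteq> qE" by auto
  have one: "\<forall>a\<in>ax S. \<forall>b\<in>ax S. a = b" using assms card_le_Suc0_iff_eq[OF ax_fin] by simp
  have "\<forall>h\<in>#S. snd h \<in> {qE, snd g}"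
  proof
    fix h assume h: "h \<in># S"
    show "snd h \<in> {qE, snd g}"
    proof (cases "snd h = qE")
      case False
      hence "snd h \<in> ax S" "snd g \<in> ax S" using h g by (auto simp: ax_def)
      thus ?thesis using one by auto
    qed simp
  qed
  thus ?thesis by blast
qed

lemma prodS_mset: assumes "\<forall>g\<in>#S. snd g \<in> {qE, X}" "mset xs = S"
  shows "prodS S = foldr q8_mult xs one8"
proof -
  have st: "set (listof S) = set_mset S" by (metis mset_listof set_mset_mset)
  show ?thesis unfolding prodS_def
    by (rule foldr_comm_perm) (use assms st in \<open>auto intro: commute8[of _ X]\<close>)
qed

definition Good :: "q8 multiset \<Rightarrow> bool" where
  "Good S = (if 2 \<le> card (ax S) then vsum S = qE else prodS S = one8)"

lemma Bchar: "(one8 \<in> {foldr q8_mult xs one8 | xs. mset xs = S}) = Good S"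
proof (cases "2 \<le> card (ax S)")
  case True
  have "\<not> (\<forall>a\<in>ax S. \<forall>b\<in>ax S. a = b)" using True card_le_Suc0_iff_eq[OF ax_fin, of S] by simp
  then obtain u v where uv: "u \<in> ax S" "v \<in> ax S" "u \<noteq> v" by blast
  then obtain a b where ab: "a \<in># S" "b \<in># S" "snd a = u" "snd b = v" "u \<noteq> qE" "v \<noteq> qE"
    by (auto simp: ax_def)
  have "a \<noteq> b" using ab uv by auto
  hence bin: "b \<in># S - {#a#}" using ab by (simp add: in_diff_count)
  have S: "S = add_mset a (add_mset b (S - {#a#} - {#b#}))"
    using insert_DiffM[OF ab(1)] insert_DiffM[OF bin] by metis
  define rs where "rs = listof (S - {#a#} - {#b#})"
  have m1: "mset (a # b # rs) = S" using S by (simp add: rs_def)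
  have m2: "mset (b # a # rs) = S" using m1 by (simp add: add_mset_commute)
  have flip: "foldr q8_mult (b # a # rs) one8 = neg8 (foldr q8_mult (a # b # rs) one8)"
    using anticomm8[of a b] ab uv by simp
  have vs: "vsum S = snd (foldr q8_mult (a # b # rs) one8)" by (rule vsum_mset[OF m1])
  show ?thesis
  proof
    assume "one8 \<in> {foldr q8_mult xs one8 | xs. mset xs = S}"
    then obtain xs where "mset xs = S" "foldr q8_mult xs one8 = one8" by auto
    thus "Good S" using True vsum_mset[of xs S] by (simp add: Good_def one8_def)
  next
    assume "Good S"
    hence "vsum S = qE" using True by (simp add: Good_def)
    then obtain s where s: "foldr q8_mult (a # b # rs) one8 = (s, qE)" using vs
      by (metis prod.collapse)
    show "one8 \<in> {foldr q8_mult xs one8 | xs. mset xs = S}"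
    proof (cases s)
      case True
      hence "foldr q8_mult (b # a # rs) one8 = one8" using flip s by (simp add: neg8_def one8_def)
      thus ?thesis using m2 by (auto intro!: exI[of _ "b # a # rs"])
    next
      case False
      hence "foldr q8_mult (a # b # rs) one8 = one8" using s by (simp add: one8_def)
      thus ?thesis using m1 by (auto intro!: exI[of _ "a # b # rs"])
    qed
  qed
next
  case False
  then obtain X where X: "\<forall>g\<in>#S. snd g \<in> {qE, X}" using small_ax by fastforce
  have "{foldr q8_mult xs one8 | xs. mset xs = S} = {prodS S}"
    using prodS_mset[OF X] by (auto intro!: exI[of _ "listof S"])
  thus ?thesis using False by (auto simp: Good_def)
qed


definition IJK :: "qunit set" where "IJK = {qI, qJ, qK}"

definition inv8 :: "q8 multiset \<Rightarrow> qunit set \<times> q8" where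
  "inv8 S = (if 2 \<le> card (ax S) then (IJK, (False, vsum S)) else (ax S, prodS S))"

definition Psi :: "qunit set \<times> q8 \<Rightarrow> qunit set \<times> q8 \<Rightarrow> bool" where
  "Psi a b = (if 2 \<le> card (fst a \<union> fst b) then snd (q8_mult (snd a) (snd b)) = qE
              else q8_mult (snd a) (snd b) = one8)"

lemma card_IJK[simp]: "card IJK = 3" by (simp add: IJK_def)
lemma finite_IJK[simp]: "finite IJK" by (simp add: IJK_def)

lemma fst_inv_sub: "fst (inv8 S) \<subseteq> IJK"
  using ax_sub[of S] by (simp add: inv8_def IJK_def)

lemma snd_inv: "snd (snd (inv8 S)) = vsum S" by (simp add: inv8_def vsum_def)

lemma prodS_plus_small: assumes "\<not> 2 \<le> card (ax (S + T))"
  shows "prodS (S + T) = q8_mult (prodS S) (prodS T)"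
proof -
  have c: "card (ax (S+T)) \<le> 1" using assms by linarith
  obtain X where X: "\<forall>g\<in>#S+T. snd g \<in> {qE, X}" using small_ax[OF c] by blast
  have "prodS (S + T) = foldr q8_mult (listof S @ listof T) one8"
    by (rule prodS_mset[OF X]) simp
  also have "\<dots> = q8_mult (prodS S) (prodS T)"
    unfolding prodS_def foldr_append by (subst foldr_mult) (rule refl)
  finally show ?thesis .
qed

lemma card_union_inv: "(2 \<le> card (fst (inv8 S) \<union> fst (inv8 T))) = (2 \<le> card (ax (S + T)))"
proof (cases "2 \<le> card (ax S) \<or> 2 \<le> card (ax T)")
  case True
  have u: "fst (inv8 S) \<union> fst (inv8 T) = IJK"
    using True fst_inv_sub[of S] fst_inv_sub[of T] by (auto simp: inv8_def)
  have "card (ax S) \<le> card (ax (S+T))" "card (ax T) \<le> card (ax (S+T))"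
    unfolding ax_plus by (auto intro: card_mono)
  thus ?thesis using True u by auto
next
  case False
  thus ?thesis by (simp add: inv8_def ax_plus)
qed

lemma Good_plus: "Good (S + T) = Psi (inv8 S) (inv8 T)"
proof (cases "2 \<le> card (ax (S + T))")
  case True
  thus ?thesis using card_union_inv[of S T]
    by (simp add: Good_def Psi_def snd_mult snd_inv vsum_plus)
next
  case False
  have "\<not> 2 \<le> card (ax S)" "\<not> 2 \<le> card (ax T)" using False
    unfolding ax_plus by (meson card_mono ax_fin finite_Un le_trans sup_ge1 sup_ge2)+
  thus ?thesis using False card_union_inv[of S T] prodS_plus_small[OF False]
    by (simp add: Good_def Psi_def inv8_def)
qed

lemma rel_eq: "class_rel Q8 = {(S, S'). \<forall>T. Psi (inv8 S) (inv8 T) = Psi (inv8 S') (inv8 T)}"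
proof -
  have sq: "seqs Q8 = UNIV" by (simp add: seqs_def Q8_def)
  have pq: "prod_one_seqs Q8 = {S. Good S}"
    by (simp add: prod_one_seqs_def seqs_def seq_prods_def Q8_def Bchar[symmetric] one8_def)
  show ?thesis unfolding class_rel_def sq pq by (auto simp: Good_plus)
qed

definition Imglist :: "(qunit set \<times> q8) list" where
  "Imglist = [(IJK, (False, qE)), (IJK, (False, qI)), (IJK, (False, qJ)), (IJK, (False, qK)),
    ({}, (False, qE)), ({}, (True, qE)),
    ({qI}, (False, qE)), ({qI}, (True, qE)), ({qI}, (False, qI)), ({qI}, (True, qI)),
    ({qJ}, (False, qE)), ({qJ}, (True, qE)), ({qJ}, (False, qJ)), ({qJ}, (True, qJ)),
    ({qK}, (False, qE)), ({qK}, (True, qE)), ({qK}, (False, qK)), ({qK}, (True, qK))]"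

lemma Imglist_distinct: "distinct Imglist"
  by (simp add: Imglist_def IJK_def)

lemma Imglist_len: "length Imglist = 18" by (simp add: Imglist_def)

definition sig :: "qunit set \<times> q8 \<Rightarrow> bool list" where "sig a = map (Psi a) Imglist"

lemma sig_distinct: "distinct (map sig Imglist)"
  by (simp add: sig_def Imglist_def IJK_def Psi_def qm one8_def card_insert_if)


lemma vclos: "u \<in> {qE, X} \<Longrightarrow> w \<in> {qE, X} \<Longrightarrow> vadd u w \<in> {qE, X}"
  by (cases X; auto simp: vadd_def)

lemma foldr_vclos: "\<forall>u\<in>set us. u \<in> {qE, X} \<Longrightarrow> foldr vadd us qE \<in> {qE, X}"
proof (induction us)
  case (Cons u us)
  thus ?case using vclos[of u X "foldr vadd us qE"] by simp
qed simp

lemma prod_clos: assumes "\<forall>g\<in>#S. snd g \<in> {qE, X}" shows "snd (prodS S) \<in> {qE, X}"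
proof -
  have st: "set (listof S) = set_mset S" by (metis mset_listof set_mset_mset)
  have "snd (prodS S) = foldr vadd (map snd (listof S)) qE"
    by (simp add: prodS_def fold_snd one8_def)
  also have "\<dots> \<in> {qE, X}" by (rule foldr_vclos) (use assms st in auto)
  finally show ?thesis .
qed

lemma inv_in: "inv8 S \<in> set Imglist"
proof (cases "2 \<le> card (ax S)")
  case True
  thus ?thesis by (cases "vsum S") (simp_all add: inv8_def Imglist_def)
next
  case False
  have c: "card (ax S) \<le> 1" using False by linarith
  obtain X where X: "\<forall>g\<in>#S. snd g \<in> {qE, X}" using small_ax[OF c] by blast
  show ?thesis
  proof (cases "ax S = {}")
    case True
    hence "\<forall>g\<in>#S. snd g \<in> {qE, qE}" by (auto simp: ax_def)
    hence "snd (prodS S) \<in> {qE, qE}" by (rule prod_clos)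
    then obtain s where p: "prodS S = (s, qE)" by (metis prod.collapse singleton_iff insert_absorb2)
    show ?thesis using False True p by (cases s) (simp_all add: inv8_def Imglist_def)
  next
    case ne: False
    then obtain u where u: "u \<in> ax S" by blast
    have ux: "u = X" "X \<noteq> qE" using u X by (auto simp: ax_def)
    have "ax S \<subseteq> {X}" using X by (auto simp: ax_def)
    hence axX: "ax S = {X}" using u ux by auto
    have XI: "X \<in> {qI, qJ, qK}" using ax_sub[of S] axX by auto
    have w: "snd (prodS S) \<in> {qE, X}" by (rule prod_clos[OF X])
    obtain s w where p: "prodS S = (s, w)" by (metis prod.collapse)
    show ?thesis using False axX p w XI
      by (cases s) (auto simp: inv8_def Imglist_def)
  qed
qed

lemma inv_mset: "inv8 (mset xs) = (if 2 \<le> card (ax (mset xs))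
   then (IJK, (False, snd (foldr q8_mult xs one8))) else (ax (mset xs), foldr q8_mult xs one8))"
proof (cases "2 \<le> card (ax (mset xs))")
  case True
  thus ?thesis by (simp add: inv8_def vsum_mset)
next
  case False
  have c: "card (ax (mset xs)) \<le> 1" using False by linarith
  obtain X where X: "\<forall>g\<in>#mset xs. snd g \<in> {qE, X}" using small_ax[OF c] by blast
  show ?thesis using False prodS_mset[OF X refl] by (simp add: inv8_def)
qed

definition Ws :: "q8 list list" where
  "Ws = [[(False,qI),(False,qJ),(False,qK)], [(False,qJ),(False,qK)], [(False,qK),(False,qI)],
    [(False,qI),(False,qJ)], [], [(True,qE)],
    [(False,qI),(True,qI)], [(False,qI),(False,qI)], [(False,qI)], [(True,qI)],
    [(False,qJ),(True,qJ)], [(False,qJ),(False,qJ)], [(False,qJ)], [(True,qJ)],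
    [(False,qK),(True,qK)], [(False,qK),(False,qK)], [(False,qK)], [(True,qK)]]"

lemma Ws_ok: "map (\<lambda>w. inv8 (mset w)) Ws = Imglist"
  by (simp add: Ws_def Imglist_def inv_mset ax_def qm one8_def card_insert_if IJK_def)

lemma range_inv: "range inv8 = set Imglist"
proof
  show "range inv8 \<subseteq> set Imglist" using inv_in by auto
  have "set Imglist = (\<lambda>w. inv8 (mset w)) ` set Ws" using Ws_ok by (metis set_map)
  thus "set Imglist \<subseteq> range inv8" by auto
qed

lemma rel_eq2: "class_rel Q8 = {(S, S'). inv8 S = inv8 S'}"
proof -
  have inj: "inj_on sig (set Imglist)" using sig_distinct by (simp add: distinct_map)
  have "(\<forall>T. Psi (inv8 S) (inv8 T) = Psi (inv8 S') (inv8 T)) \<longleftrightarrow> inv8 S = inv8 S'" for S S'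
  proof
    assume a: "\<forall>T. Psi (inv8 S) (inv8 T) = Psi (inv8 S') (inv8 T)"
    have "\<forall>b\<in>set Imglist. Psi (inv8 S) b = Psi (inv8 S') b"
      using a range_inv by (metis rangeE)
    hence "sig (inv8 S) = sig (inv8 S')" by (simp add: sig_def)
    thus "inv8 S = inv8 S'" using inj inv_in[of S] inv_in[of S'] by (meson inj_onD)
  qed simp
  thus ?thesis unfolding rel_eq by auto
qed

theorem mainTheorem10:
  shows "card (class_semigroup Q8) = 18"
proof -
  have sq: "seqs Q8 = UNIV" by (simp add: seqs_def Q8_def)
  have q: "class_semigroup Q8 = (\<lambda>a. inv8 -` {a}) ` range inv8"
  proof -
    have "class_semigroup Q8 = (\<lambda>x. {S'. inv8 x = inv8 S'}) ` UNIV"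
      unfolding class_semigroup_def sq rel_eq2 quotient_def by auto
    also have "\<dots> = (\<lambda>x. {S'. inv8 S' = inv8 x}) ` UNIV"
    proof -
      have "(\<lambda>x. {S'. inv8 x = inv8 S'}) = (\<lambda>x. {S'. inv8 S' = inv8 x})" by (auto simp: fun_eq_iff)
      thus ?thesis by (rule arg_cong)
    qed
    also have "\<dots> = (\<lambda>a. inv8 -` {a}) ` range inv8"
      by (simp add: image_image vimage_def)
    finally show ?thesis .
  qed
  have inj: "inj_on (\<lambda>a. inv8 -` {a}) (range inv8)"
  proof (rule inj_onI)
    fix a b assume "a \<in> range inv8" "b \<in> range inv8" "inv8 -` {a} = inv8 -` {b}"
    then obtain S where "inv8 S = a" "S \<in> inv8 -` {b}" by auto
    thus "a = b" by auto
  qed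
  have "card (class_semigroup Q8) = card (range inv8)" unfolding q by (rule card_image[OF inj])
  also have "\<dots> = 18" unfolding range_inv using Imglist_distinct Imglist_len by (simp add: distinct_card)
  finally show ?thesis .
qed

end
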